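(* Let $\mathcal M\subset{}^d\mathcal K$ be maximal isotropic. If $n_+(\mathcal M)=0$, then $\dim\ker\Delta(\mathcal M,\underline a)\leq n_0(\mathcal M)$.
   Context: Let $\mathcal G=(V,\mathcal I,\mathcal E,\partial)$ be a finite connected graph with internal edges $\mathcal I$ (intervals $I_i=[0,a_i]$, $a_i>0$) and external edges $\mathcal E$ (half-lines $I_e=[0,\infty)$). $\mathcal H=\bigoplus_jL^2(I_j)$; $\mathcal D$ = $\psi\in\mathcal H$ with $\psi_j,\psi_j'$ absolutely continuous, $\psi_j''\in L^2$. $\mathcal K=\mathbb C^{|\mathcal E|}\oplus\mathbb C^{|\mathcal I|}\oplus\mathbb C^{|\mathcal I|}$, ${}^d\mathcal K=\mathcal K\oplus\mathcal K$. For $\psi\in\mathcal D$: $\underline\psi=(\{\psi_e(0)\},\{\psi_i(0)\},\{\psi_i(a_i)\})$, $\underline\psi'=(\{\psi_e'(0)\},\{\psi_i'(0)\},\{-\psi_i'(a_i)\})$. Maximal isotropic subspaces of ${}^d\mathcal K$ are exactly $\mathcal M(A,B)=\{\chi_1\oplus\chi_2:A\chi_1+B\chi_2=0\}$ with $A,B$ linear on $\mathcal K$, $(A,B)$ of rank $|\mathcal E|+2|\mathcal I|$ and $AB^\dagger$ self-adjoint. $\Delta(\mathcal M,\underline a)$ is the self-adjoint operator $(\Delta\psi)_j=\psi_j''$ on $\{\psi\in\mathcal D:A\underline\psi+B\underline\psi'=0\}$. $n_+(\mathcal M)$, $n_0(\mathcal M)$ are the numbers of positive, resp. zero, eigenvalues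 (with multiplicity) of $AB^\dagger$, independent of the choice of $(A,B)$ with $\mathcal M=\mathcal M(A,B)$. *)

theory Defs
  imports "HOL-Analysis.Analysis" "HOL-Library.Function_Algebras"
    "Jordan_Normal_Form.Spectral_Radius" "Jordan_Normal_Form.DL_Rank"
begin

text \<open>Edges of the metric graph: external edges are Inl e (e < nE), half-lines [0,inf);
  internal edges are Inr i (i < nI), intervals [0, a i].
  The auxiliary space K = C^nE + C^nI + C^nI is C^(nE + 2 nI), with coordinates
  0..nE-1 (external, at 0), nE..nE+nI-1 (internal, at 0), nE+nI..nE+2nI-1 (internal, at a i).\<close>

type_synonym edge = "nat + nat"

definition edges :: "nat \<Rightarrow> nat \<Rightarrow> edge set" where
  "edges nE nI = Inl ` {..<nE} \<union> Inr ` {..<nI}"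

definition edge_interval :: "(nat \<Rightarrow> real) \<Rightarrow> edge \<Rightarrow> real set" where
  "edge_interval a j = (case j of Inl e \<Rightarrow> {0..} | Inr i \<Rightarrow> {0..a i})"

definition L2_on :: "real set \<Rightarrow> (real \<Rightarrow> complex) \<Rightarrow> bool" where
  "L2_on S f \<longleftrightarrow> set_borel_measurable lborel S f \<and>
     set_integrable lborel S (\<lambda>x. (cmod (f x))\<^sup>2)"

text \<open>psi in the domain D, with psi1 = psi' and psi2 = psi'' on every edge:
  psi_j and psi_j' absolutely continuous (written as indefinite integrals of
  locally integrable functions), psi_j and psi_j'' in L^2.  Outside the edges
  and outside the intervals psi is normalised to 0 (psi is an element of the
  direct sum of the L^2(I_j), continuous representatives on I_j).\<close>
definition in_dom :: "nat \<Rightarrow> nat \<Rightarrow> (nat \<Rightarrow> real) \<Rightarrow>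
    (edge \<Rightarrow> real \<Rightarrow> complex) \<Rightarrow> (edge \<Rightarrow> real \<Rightarrow> complex) \<Rightarrow>
    (edge \<Rightarrow> real \<Rightarrow> complex) \<Rightarrow> bool" where
  "in_dom nE nI a \<psi> \<psi>1 \<psi>2 \<longleftrightarrow>
     (\<forall>j. j \<notin> edges nE nI \<longrightarrow> \<psi> j = (\<lambda>x. 0)) \<and>
     (\<forall>j\<in>edges nE nI.
        (\<forall>x. x \<notin> edge_interval a j \<longrightarrow> \<psi> j x = 0) \<and>
        L2_on (edge_interval a j) (\<psi> j) \<and>
        L2_on (edge_interval a j) (\<psi>2 j) \<and>
        (\<forall>x\<in>edge_interval a j.
            set_integrable lborel {0..x} (\<psi>1 j) \<and>
            set_integrable lborel {0..x} (\<psi>2 j) \<and>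
            \<psi> j x = \<psi> j 0 + (LBINT t:{0..x}. \<psi>1 j t) \<and>
            \<psi>1 j x = \<psi>1 j 0 + (LBINT t:{0..x}. \<psi>2 j t)))"

definition bval :: "nat \<Rightarrow> nat \<Rightarrow> (nat \<Rightarrow> real) \<Rightarrow> (edge \<Rightarrow> real \<Rightarrow> complex) \<Rightarrow> complex vec" where
  "bval nE nI a \<psi> = vec (nE + 2 * nI) (\<lambda>k.
      if k < nE then \<psi> (Inl k) 0
      else if k < nE + nI then \<psi> (Inr (k - nE)) 0
      else \<psi> (Inr (k - nE - nI)) (a (k - nE - nI)))"

definition bder :: "nat \<Rightarrow> nat \<Rightarrow> (nat \<Rightarrow> real) \<Rightarrow> (edge \<Rightarrow> real \<Rightarrow> complex) \<Rightarrow> complex vec" where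
  "bder nE nI a \<psi>1 = vec (nE + 2 * nI) (\<lambda>k.
      if k < nE then \<psi>1 (Inl k) 0
      else if k < nE + nI then \<psi>1 (Inr (k - nE)) 0
      else - \<psi>1 (Inr (k - nE - nI)) (a (k - nE - nI)))"

definition Delta_dom :: "nat \<Rightarrow> nat \<Rightarrow> (nat \<Rightarrow> real) \<Rightarrow> complex mat \<Rightarrow> complex mat \<Rightarrow>
    (edge \<Rightarrow> real \<Rightarrow> complex) set" where
  "Delta_dom nE nI a A B = {\<psi>. \<exists>\<psi>1 \<psi>2. in_dom nE nI a \<psi> \<psi>1 \<psi>2 \<and>
      A *\<^sub>v bval nE nI a \<psi> + B *\<^sub>v bder nE nI a \<psi>1 = 0\<^sub>v (nE + 2 * nI)}"

definition Delta_ker :: "nat \<Rightarrow> nat \<Rightarrow> (nat \<Rightarrow> real) \<Rightarrow> complex mat \<Rightarrow> complex mat \<Rightarrow>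
    (edge \<Rightarrow> real \<Rightarrow> complex) set" where
  "Delta_ker nE nI a A B = {\<psi>. \<exists>\<psi>1 \<psi>2. in_dom nE nI a \<psi> \<psi>1 \<psi>2 \<and>
      A *\<^sub>v bval nE nI a \<psi> + B *\<^sub>v bder nE nI a \<psi>1 = 0\<^sub>v (nE + 2 * nI) \<and>
      (\<forall>j\<in>edges nE nI. AE x in lborel. x \<in> edge_interval a j \<longrightarrow> \<psi>2 j x = 0)}"

definition fscale :: "complex \<Rightarrow> (edge \<Rightarrow> real \<Rightarrow> complex) \<Rightarrow> (edge \<Rightarrow> real \<Rightarrow> complex)" where
  "fscale c \<psi> = (\<lambda>j x. c * \<psi> j x)"

definition n_plus :: "complex mat \<Rightarrow> nat" where
  "n_plus M = (\<Sum>k\<in>{k. eigenvalue M k \<and> Im k = 0 \<and> Re k > 0}. Polynomial.order k (char_poly M))"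

definition n_zero :: "complex mat \<Rightarrow> nat" where
  "n_zero M = (if eigenvalue M 0 then Polynomial.order 0 (char_poly M) else 0)"

end

theory Submission
  imports Defs "Jordan_Normal_Form.Jordan_Normal_Form_Uniqueness"
begin

unbundle no vec_syntax

abbreviation adj :: "complex mat \<Rightarrow> complex mat" where "adj \<equiv> mat_adjoint"

lemma adj_dims[simp]: "dim_row (adj A) = dim_col A" "dim_col (adj A) = dim_row A"
  by (auto simp: mat_adjoint_def mat_of_rows_def)

lemma adj_carrier[simp]: "A \<in> carrier_mat nr nc \<Longrightarrow> adj A \<in> carrier_mat nc nr"
  by (metis adj_dims carrier_matD carrier_matI)

lemma adj_mv_carrier[simp]: "A \<in> carrier_mat nr nc \<Longrightarrow> x \<in> carrier_vec nr \<Longrightarrow> adj A *\<^sub>v x \<in> carrier_vec nc"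
  by (metis adj_carrier mult_mat_vec_carrier)

lemma mv_carrier[simp]: "A \<in> carrier_mat nr nc \<Longrightarrow> x \<in> carrier_vec nc \<Longrightarrow> A *\<^sub>v x \<in> carrier_vec nr"
  by (metis mult_mat_vec_carrier)

lemma adj_index[simp]: "i < dim_col A \<Longrightarrow> j < dim_row A \<Longrightarrow> adj A $$ (i,j) = cnj (A $$ (j,i))"
  by (auto simp: mat_adjoint_def mat_of_rows_def)

lemma adj_adj[simp]: "adj (adj A) = A"
  by (rule eq_matI) auto

lemma adj_mult: "A \<in> carrier_mat nr n \<Longrightarrow> B \<in> carrier_mat n nc \<Longrightarrow> adj (A * B) = adj B * adj A"
  by (rule eq_matI) (auto simp: scalar_prod_def mult.commute)

lemma adj_add: "A \<in> carrier_mat nr nc \<Longrightarrow> B \<in> carrier_mat nr nc \<Longrightarrow> adj (A + B) = adj A + adj B"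
  by (rule eq_matI) auto

lemma adj_smult: "adj (c \<cdot>\<^sub>m A) = cnj c \<cdot>\<^sub>m adj A"
  by (rule eq_matI) auto

lemma adj_one[simp]: "adj (1\<^sub>m n) = 1\<^sub>m n"
  by (rule eq_matI) auto

lemma adj_mult_vec_index: "A \<in> carrier_mat nr nc \<Longrightarrow> x \<in> carrier_vec nr \<Longrightarrow> i < nc \<Longrightarrow>
   (adj A *\<^sub>v x) $ i = (\<Sum>j<nr. cnj (A $$ (j,i)) * x $ j)"
  by (auto simp: scalar_prod_def intro!: sum.cong simp: lessThan_atLeast0)

lemma cip_adj: assumes A: "A \<in> carrier_mat nr nc" and x: "x \<in> carrier_vec nc" and y: "y \<in> carrier_vec nr"
  shows "(A *\<^sub>v x) \<bullet>c y = x \<bullet>c (adj A *\<^sub>v y)"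
proof -
  have "(A *\<^sub>v x) \<bullet>c y = (\<Sum>i<nr. (\<Sum>j<nc. A $$ (i,j) * x $ j) * cnj (y $ i))"
    using A x y by (auto simp: scalar_prod_def lessThan_atLeast0 intro!: sum.cong)
  also have "\<dots> = (\<Sum>j<nc. x $ j * cnj (\<Sum>i<nr. cnj (A $$ (i,j)) * y $ i))"
    by (simp add: sum_distrib_left sum_distrib_right mult_ac sum.swap[of _ "{..<nr}"])
  also have "\<dots> = x \<bullet>c (adj A *\<^sub>v y)"
    using A x y by (auto simp: scalar_prod_def lessThan_atLeast0 intro!: sum.cong)
  finally show ?thesis .
qed

lemma cip_self_real: "(x::complex vec) \<bullet>c x = of_real (\<Sum>i<dim_vec x. (cmod (x $ i))\<^sup>2)"
  by (simp add: scalar_prod_def lessThan_atLeast0 of_real_sum complex_norm_square del: of_real_power)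

lemma cip_self_zero: assumes "(x::complex vec) \<bullet>c x = 0" shows "x = 0\<^sub>v (dim_vec x)"
proof -
  have "(\<Sum>i<dim_vec x. (cmod (x $ i))\<^sup>2) = 0" using assms cip_self_real[of x] by (metis of_real_eq_0_iff)
  then have "\<forall>i\<in>{..<dim_vec x}. (cmod (x $ i))\<^sup>2 = 0"
    by (subst (asm) sum_nonneg_eq_0_iff) auto
  then show ?thesis by (intro eq_vecI) auto
qed

lemma cip_comm: "dim_vec x = dim_vec y \<Longrightarrow> y \<bullet>c x = cnj (x \<bullet>c y)"
  by (simp add: scalar_prod_def mult.commute)

lemma cip_lincomb: assumes S: "S \<subseteq> carrier_vec n" "finite S" and x: "x \<in> carrier_vec n"
  shows "module.lincomb (module_vec TYPE(complex) n) a S \<bullet>c x = (\<Sum>s\<in>S. a s * (s \<bullet>c x))"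
proof -
  interpret vec_space "TYPE(complex)" n .
  have d: "dim_vec (lincomb a S) = n" by (rule lincomb_dim[OF S(2,1)])
  have "lincomb a S \<bullet>c x = (\<Sum>i<n. (\<Sum>s\<in>S. a s * s $ i) * cnj (x $ i))"
    unfolding scalar_prod_def lessThan_atLeast0 using x d
    by (intro sum.cong) (auto simp: lincomb_index[OF _ S(1)])
  also have "\<dots> = (\<Sum>i<n. \<Sum>s\<in>S. a s * s $ i * cnj (x $ i))"
    by (simp add: sum_distrib_right)
  also have "\<dots> = (\<Sum>s\<in>S. \<Sum>i<n. a s * s $ i * cnj (x $ i))"
    by (rule sum.swap)
  also have "\<dots> = (\<Sum>s\<in>S. a s * (\<Sum>i<n. s $ i * cnj (x $ i)))"
    by (simp add: sum_distrib_left mult.assoc)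
  also have "\<dots> = (\<Sum>s\<in>S. a s * (s \<bullet>c x))"
    using S x by (intro sum.cong refl) (auto simp: scalar_prod_def lessThan_atLeast0 intro!: sum.cong)
  finally show ?thesis by simp
qed

lemma rank_full_orth:
  fixes A B :: "complex mat"
  assumes A: "A \<in> carrier_mat n n" and B: "B \<in> carrier_mat n n"
    and rk: "vec_space.rank n (mat_of_cols n (cols A @ cols B)) = n"
    and x: "x \<in> carrier_vec n" and ax: "adj A *\<^sub>v x = 0\<^sub>v n" and bx: "adj B *\<^sub>v x = 0\<^sub>v n"
  shows "x = 0\<^sub>v n"
proof -
  interpret vec_space "TYPE(complex)" n .
  define M where "M = mat_of_cols n (cols A @ cols B)"
  have colsAB: "set (cols A @ cols B) \<subseteq> carrier_vec n" using A B by (auto simp: cols_def)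
  have M: "M \<in> carrier_mat n (length (cols A @ cols B))" unfolding M_def by (rule mat_of_cols_carrier)
  have cM: "cols M = cols A @ cols B" unfolding M_def using colsAB by (simp add: cols_mat_of_cols)
  have orth: "s \<bullet>c x = 0" if "s \<in> set (cols M)" for s
  proof -
    { fix C :: "complex mat" assume C: "C \<in> carrier_mat n n" and cx: "adj C *\<^sub>v x = 0\<^sub>v n"
        and s: "s \<in> set (cols C)"
      then obtain k where k: "k < n" and sk: "s = col C k" by (auto simp: cols_def)
      have "(adj C *\<^sub>v x) $ k = 0" using cx k by simp
      also have "(adj C *\<^sub>v x) $ k = (\<Sum>j<n. cnj (C $$ (j,k)) * x $ j)"
        by (rule adj_mult_vec_index[OF C x k])
      finally have "cnj (\<Sum>j<n. cnj (C $$ (j,k)) * x $ j) = 0" by simp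
      moreover have "s \<bullet>c x = cnj (\<Sum>j<n. cnj (C $$ (j,k)) * x $ j)"
        using C x k sk by (auto simp: scalar_prod_def lessThan_atLeast0 intro!: sum.cong)
      ultimately have "s \<bullet>c x = 0" by simp }
    then show ?thesis using that cM A B ax bx by auto
  qed
  obtain S where S: "finite S" "maximal S (\<lambda>T. T \<subseteq> set (cols M) \<and> lin_indpt T)"
    using maximal_exists_superset[of "set (cols M)" "(\<lambda>T. T \<subseteq> set (cols M) \<and> lin_indpt T)" "{}"]
    by (auto simp: lin_dep_def)
  have rS: "rank M = card S" by (rule rank_card_indpt[OF M S(2)])
  have SM: "S \<subseteq> set (cols M)" "lin_indpt S" using S(2) unfolding maximal_def by auto
  have Sc: "S \<subseteq> carrier_vec n" using SM(1) cM colsAB by auto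
  have "basis S"
    by (rule dim_li_is_basis[OF fin_dim S(1) Sc SM(2)]) (use rk rS dim_is_n M_def in auto)
  then have "span S = carrier_vec n" unfolding basis_def by auto
  then have "x \<in> span S" using x by auto
  then obtain a where xa: "x = lincomb a S" using finite_in_span[OF S(1) Sc] by auto
  have "x \<bullet>c x = (\<Sum>s\<in>S. a s * (s \<bullet>c x))"
    using cip_lincomb[OF Sc S(1) x, of a] xa by simp
  also have "\<dots> = 0" using orth SM(1) by (auto intro!: sum.neutral)
  finally show ?thesis using cip_self_zero[of x] x by auto
qed

lemma vec_eq_idx: "v \<in> carrier_vec n \<Longrightarrow> w \<in> carrier_vec n \<Longrightarrow> v = w \<longleftrightarrow> (\<forall>i<n. v $ i = w $ i)"
  by (auto intro: eq_vecI)

lemma smult_mat_vec_assoc: "dim_vec v = dim_col A \<Longrightarrow> (k \<cdot>\<^sub>m A) *\<^sub>v v = k \<cdot>\<^sub>v (A *\<^sub>v (v :: complex vec))"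
  by (intro eq_vecI) (auto simp: scalar_prod_def sum_distrib_left mult.assoc)

lemma cip_smult_right: "dim_vec z = dim_vec y \<Longrightarrow> y \<bullet>c (k \<cdot>\<^sub>v z) = cnj k * (y \<bullet>c (z :: complex vec))"
  by (simp add: scalar_prod_def sum_distrib_left mult_ac)

lemma inv_of_adj_inj:
  assumes Y: "Y \<in> carrier_mat n n"
    and inj: "\<And>x. x \<in> carrier_vec n \<Longrightarrow> adj Y *\<^sub>v x = 0\<^sub>v n \<Longrightarrow> x = 0\<^sub>v n"
  shows "\<exists>C\<in>carrier_mat n n. C * adj Y = 1\<^sub>m n \<and> adj Y * C = 1\<^sub>m n"
proof -
  have aY: "adj Y \<in> carrier_mat n n" using Y by simp
  have "det (adj Y) \<noteq> 0" using det_0_iff_vec_prod_zero[OF aY] inj by auto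
  from det_non_zero_imp_unit[OF aY this, unfolded Units_def, of "()"]
  show ?thesis by (auto simp: ring_mat_def)
qed

lemma adj_pm_inj:
  fixes A B :: "complex mat"
  assumes A: "A \<in> carrier_mat n n" and B: "B \<in> carrier_mat n n"
    and herm: "adj (A * adj B) = A * adj B"
    and orth: "\<And>x. x \<in> carrier_vec n \<Longrightarrow> adj A *\<^sub>v x = 0\<^sub>v n \<Longrightarrow> adj B *\<^sub>v x = 0\<^sub>v n \<Longrightarrow> x = 0\<^sub>v n"
    and c: "c = \<i> \<or> c = - \<i>" and x: "x \<in> carrier_vec n"
    and z: "adj (A + c \<cdot>\<^sub>m B) *\<^sub>v x = 0\<^sub>v n"
  shows "x = 0\<^sub>v n"
proof -
  define u where "u = adj B *\<^sub>v x"
  define a where "a = adj A *\<^sub>v x"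
  have u: "u \<in> carrier_vec n" and a: "a \<in> carrier_vec n" using A B x by (auto simp: u_def a_def)
  have "adj (A + c \<cdot>\<^sub>m B) = adj A + cnj c \<cdot>\<^sub>m adj B"
    using A B by (simp add: adj_add[of _ n n] adj_smult)
  then have "adj A *\<^sub>v x + cnj c \<cdot>\<^sub>v (adj B *\<^sub>v x) = 0\<^sub>v n"
    using z A B x by (simp add: add_mult_distrib_mat_vec[of _ n n] smult_mat_vec_assoc)
  then have "\<forall>i<n. a $ i + cnj c * u $ i = 0"
  proof (intro allI impI)
    fix i assume i: "i < n" and e: "adj A *\<^sub>v x + cnj c \<cdot>\<^sub>v (adj B *\<^sub>v x) = 0\<^sub>v n"
    have "(adj A *\<^sub>v x + cnj c \<cdot>\<^sub>v (adj B *\<^sub>v x)) $ i = 0" using e i by simp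
    then show "a $ i + cnj c * u $ i = 0" using i u A B x by (simp add: a_def u_def)
  qed
  then have au: "a = (- cnj c) \<cdot>\<^sub>v u"
    using a u by (subst vec_eq_idx[of _ n]) (auto simp: algebra_simps eq_neg_iff_add_eq_0)
  define H where "H = A * adj B"
  have H: "H \<in> carrier_mat n n" using A B by (simp add: H_def)
  have "(H *\<^sub>v x) \<bullet>c x = x \<bullet>c (adj H *\<^sub>v x)" by (rule cip_adj[OF H x x])
  also have "\<dots> = x \<bullet>c (H *\<^sub>v x)" using herm H_def by simp
  also have "\<dots> = cnj ((H *\<^sub>v x) \<bullet>c x)" using H x by (subst cip_comm) auto
  finally have real: "Im ((H *\<^sub>v x) \<bullet>c x) = 0" by (metis cnj.sel(2) neg_equal_zero)
  have "(H *\<^sub>v x) \<bullet>c x = (A *\<^sub>v u) \<bullet>c x" using A B x by (simp add: H_def u_def assoc_mult_mat_vec[OF A adj_carrier[OF B] x])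
  also have "\<dots> = u \<bullet>c a" unfolding a_def by (rule cip_adj[OF A u x])
  also have "\<dots> = - c * (u \<bullet>c u)" using au u by (simp add: cip_smult_right)
  finally have "Im (- c * (u \<bullet>c u)) = 0" using real by simp
  then have "Re (u \<bullet>c u) = 0" using c cip_self_real[of u] by auto
  then have "u \<bullet>c u = 0" using cip_self_real[of u] by (metis Re_complex_of_real of_real_0)
  then have u0: "u = 0\<^sub>v n" using cip_self_zero[of u] u by auto
  then have "a = 0\<^sub>v n" using au u by auto
  then show ?thesis using orth[OF x] u0 unfolding a_def u_def by auto
qed

lemma represent:
  fixes A B :: "complex mat"
  assumes A: "A \<in> carrier_mat n n" and B: "B \<in> carrier_mat n n"
    and herm: "adj (A * adj B) = A * adj B"
    and orth: "\<And>x. x \<in> carrier_vec n \<Longrightarrow> adj A *\<^sub>v x = 0\<^sub>v n \<Longrightarrow> adj B *\<^sub>v x = 0\<^sub>v n \<Longrightarrow> x = 0\<^sub>v n"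
    and c1: "\<chi>1 \<in> carrier_vec n" and c2: "\<chi>2 \<in> carrier_vec n"
    and eq: "A *\<^sub>v \<chi>1 + B *\<^sub>v \<chi>2 = 0\<^sub>v n"
  shows "\<exists>\<phi>\<in>carrier_vec n. \<chi>1 = - (adj B *\<^sub>v \<phi>) \<and> \<chi>2 = adj A *\<^sub>v \<phi>"
proof -
  define W where "W = A + (- \<i>) \<cdot>\<^sub>m B"
  define Z where "Z = A + \<i> \<cdot>\<^sub>m B"
  have W: "W \<in> carrier_mat n n" and Z: "Z \<in> carrier_mat n n" using A B by (auto simp: W_def Z_def)
  obtain C where C: "C \<in> carrier_mat n n" "adj W * C = 1\<^sub>m n"
    using inv_of_adj_inj[OF W] adj_pm_inj[OF A B herm orth, of "- \<i>"] unfolding W_def by blast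
  obtain D where D: "D \<in> carrier_mat n n" "adj Z * D = 1\<^sub>m n"
    using inv_of_adj_inj[OF Z] adj_pm_inj[OF A B herm orth, of "\<i>"] unfolding Z_def by blast
  have DZ: "adj D * Z = 1\<^sub>m n"
    using arg_cong[OF D(2), of adj] adj_mult[OF adj_carrier[OF Z] D(1)] by simp
  have Zinj: "z = 0\<^sub>v n" if z: "z \<in> carrier_vec n" "Z *\<^sub>v z = 0\<^sub>v n" for z
  proof -
    have "z = (adj D * Z) *\<^sub>v z" using DZ z by simp
    also have "\<dots> = adj D *\<^sub>v (Z *\<^sub>v z)" by (rule assoc_mult_mat_vec[OF adj_carrier[OF D(1)] Z z(1)])
    also have "\<dots> = 0\<^sub>v n" using z D by (auto intro!: eq_vecI simp: scalar_prod_def)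
    finally show ?thesis .
  qed
  define y where "y = \<chi>2 + (- \<i>) \<cdot>\<^sub>v \<chi>1"
  have y: "y \<in> carrier_vec n" using c1 c2 by (simp add: y_def)
  define \<phi> where "\<phi> = C *\<^sub>v y"
  have phi: "\<phi> \<in> carrier_vec n" using C y by (simp add: \<phi>_def)
  have "adj W *\<^sub>v \<phi> = (adj W * C) *\<^sub>v y" unfolding \<phi>_def by (rule assoc_mult_mat_vec[OF adj_carrier[OF W] C(1) y, symmetric])
  also have "\<dots> = y" unfolding C(2) using y by simp
  finally have e0: "adj W *\<^sub>v \<phi> = y" .
  have "adj W = adj A + \<i> \<cdot>\<^sub>m adj B" using A B by (simp add: W_def adj_add[of _ n n] adj_smult)
  then have e1: "adj A *\<^sub>v \<phi> + \<i> \<cdot>\<^sub>v (adj B *\<^sub>v \<phi>) = y"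
    using e0 A B phi by (simp add: add_mult_distrib_mat_vec[of _ n n] smult_mat_vec_assoc)
  define u where "u = \<chi>1 + adj B *\<^sub>v \<phi>"
  have u: "u \<in> carrier_vec n" using c1 B phi by (simp add: u_def)
  have iu: "\<i> \<cdot>\<^sub>v u = \<chi>2 - adj A *\<^sub>v \<phi>"
  proof (subst vec_eq_idx[of _ n])
    show "\<forall>i<n. (\<i> \<cdot>\<^sub>v u) $ i = (\<chi>2 - adj A *\<^sub>v \<phi>) $ i"
    proof (intro allI impI)
      fix i assume i: "i < n"
      have "(adj A *\<^sub>v \<phi> + \<i> \<cdot>\<^sub>v (adj B *\<^sub>v \<phi>)) $ i = y $ i" using e1 by simp
      then show "(\<i> \<cdot>\<^sub>v u) $ i = (\<chi>2 - adj A *\<^sub>v \<phi>) $ i"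
        using i A B c1 c2 phi by (simp add: u_def y_def algebra_simps)
    qed
  qed (use u c2 A phi in auto)
  define H where "H = A * adj B"
  have H: "H \<in> carrier_mat n n" using A B by (simp add: H_def)
  have BA: "B * adj A = H" using herm adj_mult[OF A adj_carrier[OF B]] by (simp add: H_def)
  have Hb: "A *\<^sub>v (adj B *\<^sub>v \<phi>) = H *\<^sub>v \<phi>" unfolding H_def by (rule assoc_mult_mat_vec[OF A adj_carrier[OF B] phi, symmetric])
  have Ha: "B *\<^sub>v (adj A *\<^sub>v \<phi>) = H *\<^sub>v \<phi>" unfolding BA[symmetric] by (rule assoc_mult_mat_vec[OF B adj_carrier[OF A] phi, symmetric])
  have "Z *\<^sub>v u = A *\<^sub>v u + \<i> \<cdot>\<^sub>v (B *\<^sub>v u)"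
    using A B u by (simp add: Z_def add_mult_distrib_mat_vec[of _ n n] smult_mat_vec_assoc)
  also have "\<i> \<cdot>\<^sub>v (B *\<^sub>v u) = B *\<^sub>v (\<chi>2 - adj A *\<^sub>v \<phi>)"
    using B u by (simp flip: iu add: mult_mat_vec)
  also have "\<dots> = B *\<^sub>v \<chi>2 - H *\<^sub>v \<phi>"
    using B A c2 phi by (simp add: mult_minus_distrib_mat_vec[of _ n n] Ha)
  also have "A *\<^sub>v u = A *\<^sub>v \<chi>1 + H *\<^sub>v \<phi>"
    using A B c1 phi by (simp add: u_def mult_add_distrib_mat_vec[of _ n n] Hb)
  finally have "Z *\<^sub>v u = A *\<^sub>v \<chi>1 + H *\<^sub>v \<phi> + (B *\<^sub>v \<chi>2 - H *\<^sub>v \<phi>)" .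
  also have "\<dots> = 0\<^sub>v n"
  proof (subst vec_eq_idx[of _ n])
    show "\<forall>i<n. (A *\<^sub>v \<chi>1 + H *\<^sub>v \<phi> + (B *\<^sub>v \<chi>2 - H *\<^sub>v \<phi>)) $ i = 0\<^sub>v n $ i"
    proof (intro allI impI)
      fix i assume i: "i < n"
      have "(A *\<^sub>v \<chi>1 + B *\<^sub>v \<chi>2) $ i = 0" using eq i by simp
      then show "(A *\<^sub>v \<chi>1 + H *\<^sub>v \<phi> + (B *\<^sub>v \<chi>2 - H *\<^sub>v \<phi>)) $ i = 0\<^sub>v n $ i"
        using i A B H c1 c2 phi by simp
    qed
  qed (use A B H c1 c2 phi in auto)
  finally have "u = 0\<^sub>v n" using Zinj u by blast
  then have u0: "\<chi>1 + adj B *\<^sub>v \<phi> = 0\<^sub>v n" unfolding u_def .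
  have "\<chi>1 = - (adj B *\<^sub>v \<phi>)"
  proof (rule eq_vecI)
    fix i assume "i < dim_vec (- (adj B *\<^sub>v \<phi>))"
    then have i: "i < n" using B by simp
    have "(\<chi>1 + adj B *\<^sub>v \<phi>) $ i = 0" using u0 i by simp
    then show "\<chi>1 $ i = (- (adj B *\<^sub>v \<phi>)) $ i" using i c1 B phi by (simp add: eq_neg_iff_add_eq_0)
  qed (use c1 B in simp)
  moreover have "\<chi>2 = adj A *\<^sub>v \<phi>"
  proof (rule eq_vecI)
    fix i assume "i < dim_vec (adj A *\<^sub>v \<phi>)"
    then have i: "i < n" using A by simp
    have "(\<i> \<cdot>\<^sub>v u) $ i = (\<chi>2 - adj A *\<^sub>v \<phi>) $ i" using iu by simp
    moreover have "u $ i = 0" using \<open>u = 0\<^sub>v n\<close> i by simp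
    ultimately show "\<chi>2 $ i = (adj A *\<^sub>v \<phi>) $ i" using i c2 A phi u by simp
  qed (use c2 A in simp)
  ultimately have "\<chi>1 = - (adj B *\<^sub>v \<phi>) \<and> \<chi>2 = adj A *\<^sub>v \<phi>" by simp
  then show ?thesis using phi by blast
qed

lemma sum_min1_le: "(\<Sum>n\<leftarrow>xs. min 1 n) \<le> sum_list (xs :: nat list)"
  by (induct xs) auto

lemma kernel_dim_le_order:
  fixes H :: "complex mat"
  assumes H: "H \<in> carrier_mat n n"
  shows "kernel_dim H \<le> Polynomial.order 0 (char_poly H)"
proof -
  obtain as where "char_poly H = (\<Prod>a\<leftarrow>as. [:- a, 1:])" using char_poly_factorized[OF H] by auto
  from jordan_nf_exists[OF H this] obtain n_as where jnf: "jordan_nf H n_as" by auto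
  have cm: "char_matrix H 0 ^\<^sub>m 1 = H" using H by (auto simp: char_matrix_def)
  have "kernel_dim H = dim_gen_eigenspace H 0 1" unfolding dim_gen_eigenspace_def cm ..
  also have "\<dots> = (\<Sum>n\<leftarrow>map fst [(n, e)\<leftarrow>n_as . e = 0]. min 1 n)" by (rule dim_gen_eigenspace[OF jnf])
  also have "\<dots> \<le> sum_list (map fst [(n, e)\<leftarrow>n_as . e = 0])" by (rule sum_min1_le)
  also have "\<dots> = Polynomial.order 0 (char_poly H)" unfolding jordan_nf_order[OF jnf]
    by (induct n_as) auto
  finally show ?thesis .
qed

lemma n_zero_eq: assumes H: "(H :: complex mat) \<in> carrier_mat n n"
  shows "n_zero H = Polynomial.order 0 (char_poly H)"
proof (cases "eigenvalue H 0")
  case False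
  then have "poly (char_poly H) 0 \<noteq> 0" using eigenvalue_root_char_poly[OF H] by auto
  then show ?thesis using False by (simp add: n_zero_def order_root)
qed (simp add: n_zero_def)

lemma kernel_basis_list:
  fixes H :: "complex mat"
  assumes H: "H \<in> carrier_mat n n"
  shows "\<exists>Bs. finite Bs \<and> Bs \<subseteq> mat_kernel H \<and> card Bs \<le> n_zero H \<and>
     (\<forall>v\<in>mat_kernel H. \<exists>a. \<forall>i<n. v $ i = (\<Sum>b\<in>Bs. a b * b $ i))"
proof -
  interpret K: kernel n n H by (unfold_locales, rule H)
  obtain Bs where Bs: "finite Bs" "K.basis Bs" using kernel_basis_exists[OF H] by auto
  have sub: "Bs \<subseteq> mat_kernel H" using Bs(2) unfolding K.Ker.basis_def by auto
  have span: "K.span Bs = mat_kernel H" using Bs(2) unfolding K.Ker.basis_def by auto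
  have card: "card Bs = kernel_dim H" using K.Ker.dim_basis[OF Bs] H by (simp add: kernel_dim_def)
  have "card Bs \<le> n_zero H" using card kernel_dim_le_order[OF H] n_zero_eq[OF H] by simp
  moreover have "\<exists>a. \<forall>i<n. v $ i = (\<Sum>b\<in>Bs. a b * b $ i)" if v: "v \<in> mat_kernel H" for v
  proof -
    obtain a where a: "K.lincomb a Bs = v" using K.Ker.finite_in_span[OF Bs(1)] sub span v by auto
    show ?thesis
    proof (intro exI allI impI)
      fix i assume i: "i < n"
      show "v $ i = (\<Sum>b\<in>Bs. a b * b $ i)" using K.lincomb_index[OF i sub, of a] a by simp
    qed
  qed
  ultimately show ?thesis using Bs sub by blast
qed

lemma cip_adj2: assumes A: "A \<in> carrier_mat nr nc" and x: "x \<in> carrier_vec nr" and y: "y \<in> carrier_vec nc"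
  shows "x \<bullet>c (A *\<^sub>v y) = (adj A *\<^sub>v x) \<bullet>c y"
  using cip_adj[OF adj_carrier[OF A] x y] by simp

lemma cip_smult_left: "dim_vec z = dim_vec y \<Longrightarrow> (k \<cdot>\<^sub>v z) \<bullet>c y = k * (z \<bullet>c (y :: complex vec))"
  by (simp add: scalar_prod_def sum_distrib_left mult_ac)

lemma cip_self_Re: "Re ((x :: complex vec) \<bullet>c x) \<ge> 0" "Im (x \<bullet>c x) = 0"
  unfolding cip_self_real by (simp_all add: sum_nonneg)

lemma mv_idx: "A \<in> carrier_mat nr nc \<Longrightarrow> v \<in> carrier_vec nc \<Longrightarrow> i < nr \<Longrightarrow>
   (A *\<^sub>v v) $ i = (\<Sum>k<nc. A $$ (i,k) * v $ k)"
  by (auto simp: scalar_prod_def lessThan_atLeast0 intro!: sum.cong)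

lemma cip_sum: "x \<in> carrier_vec n \<Longrightarrow> y \<in> carrier_vec n \<Longrightarrow> x \<bullet>c y = (\<Sum>i<n. x $ i * cnj (y $ i))"
  by (auto simp: scalar_prod_def lessThan_atLeast0 intro!: sum.cong)

lemma assoc3: assumes U: "U \<in> carrier_mat n n" and H: "H \<in> carrier_mat n n" and v: "v \<in> carrier_vec n"
  shows "(adj U * H * U) *\<^sub>v v = adj U *\<^sub>v (H *\<^sub>v (U *\<^sub>v v))"
proof -
  have UH: "adj U * H \<in> carrier_mat n n" by (rule mult_carrier_mat[OF adj_carrier[OF U] H])
  show ?thesis using assoc_mult_mat_vec[OF UH U v] assoc_mult_mat_vec[OF adj_carrier[OF U] H mv_carrier[OF U v]]
    by simp
qed

lemma herm_nonpos:
  fixes H :: "complex mat"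
  assumes "H \<in> carrier_mat n n" "adj H = H"
    "\<And>e v. v \<in> carrier_vec n \<Longrightarrow> v \<noteq> 0\<^sub>v n \<Longrightarrow> H *\<^sub>v v = e \<cdot>\<^sub>v v \<Longrightarrow> Re e \<le> 0"
    "x \<in> carrier_vec n"
  shows "Re ((H *\<^sub>v x) \<bullet>c x) \<le> 0"
  using assms
proof (induct n arbitrary: H x)
  case 0
  then show ?case by (simp add: scalar_prod_def)
next
  case (Suc m H x)
  define n where "n = Suc m"
  have H: "H \<in> carrier_mat n n" and herm: "adj H = H" and x: "x \<in> carrier_vec n"
    and ev: "\<And>e v. v \<in> carrier_vec n \<Longrightarrow> v \<noteq> 0\<^sub>v n \<Longrightarrow> H *\<^sub>v v = e \<cdot>\<^sub>v v \<Longrightarrow> Re e \<le> 0"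
    using Suc.prems by (auto simp: n_def)
  obtain as where cp: "char_poly H = (\<Prod>a\<leftarrow>as. [:- a, 1:])" using char_poly_factorized[OF H] by auto
  have "degree (char_poly H) = n" using degree_monic_char_poly[OF H] by simp
  then have "as \<noteq> []" using cp n_def by auto
  then obtain e as' where "as = e # as'" by (cases as) auto
  then have "poly (char_poly H) e = 0" using cp by simp
  then have "eigenvalue H e" using eigenvalue_root_char_poly[OF H] by simp
  then obtain v where v: "v \<in> carrier_vec n" "v \<noteq> 0\<^sub>v n" "H *\<^sub>v v = e \<cdot>\<^sub>v v"
    using H unfolding eigenvalue_def eigenvector_def by auto
  have Ree: "Re e \<le> 0" using ev[OF v] .
  define nrm where "nrm = (\<lambda>w :: complex vec. (1 / complex_of_real (sqrt (Re (w \<bullet>c w)))) \<cdot>\<^sub>v w)"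
  have nrm_cip: "nrm w \<bullet>c nrm w' = (1 / complex_of_real (sqrt (Re (w \<bullet>c w)))) * (1 / complex_of_real (sqrt (Re (w' \<bullet>c w')))) * (w \<bullet>c w')"
    if "dim_vec w' = dim_vec w" for w w' using that
    by (simp add: nrm_def cip_smult_left cip_smult_right)
  have pos: "Re (w \<bullet>c w) > 0" if "w \<bullet>c w \<noteq> 0" for w :: "complex vec"
    using that cip_self_Re[of w] complex_eq_iff[of "w \<bullet>c w" 0] by fastforce
  have nrm_one: "nrm w \<bullet>c nrm w = 1" if "w \<bullet>c w \<noteq> 0" for w
  proof -
    define r where "r = sqrt (Re (w \<bullet>c w))"
    have r0: "r > 0" using pos[OF that] by (simp add: r_def)
    have rr: "r * r = Re (w \<bullet>c w)" using pos[OF that] by (simp add: r_def)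
    have "w \<bullet>c w = complex_of_real (Re (w \<bullet>c w))" using cip_self_Re(2)[of w] complex_eq_iff by auto
    also have "\<dots> = complex_of_real r * complex_of_real r" by (simp flip: rr)
    finally have c: "w \<bullet>c w = complex_of_real r * complex_of_real r" .
    have "nrm w \<bullet>c nrm w = (1 / complex_of_real r) * (1 / complex_of_real r) * (w \<bullet>c w)"
      using nrm_cip[of w w] by (simp add: r_def)
    also have "\<dots> = 1" unfolding c using r0 by (simp add: field_simps)
    finally show ?thesis .
  qed
  have vv: "v \<bullet>c v \<noteq> 0" using cip_self_zero[of v] v by auto
  define u where "u = nrm v"
  have u: "u \<in> carrier_vec n" using v by (simp add: u_def nrm_def)
  have uu: "u \<bullet>c u = 1" using nrm_one[OF vv] by (simp add: u_def)
  have u0: "u \<noteq> 0\<^sub>v n" using uu u by (auto simp: scalar_prod_def)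
  have Hu: "H *\<^sub>v u = e \<cdot>\<^sub>v u" using v H
    by (simp add: u_def nrm_def mult_mat_vec smult_smult_assoc mult.commute)
  have nrm_u: "nrm u = u" using uu by (simp add: nrm_def)
  interpret cof_vec_space n "TYPE(complex)" .
  define b where "b = basis_completion u"
  from basis_completion[OF u u0, folded b_def]
  have dist_b: "distinct b" and indep: "\<not> lin_dep (set b)"
    and bc: "set b \<subseteq> carrier_vec n" and hdb: "hd b = u" and len_b: "length b = n" by auto
  from hdb len_b obtain vs where bv: "b = u # vs" by (cases b) (auto simp: n_def)
  define ws where "ws = gram_schmidt n b"
  from gram_schmidt_result[OF bc dist_b indep ws_def]
  have ws: "corthogonal ws" "set ws \<subseteq> carrier_vec n" "length ws = n" by (auto simp: len_b)
  have hdws: "hd ws = u" unfolding ws_def bv using u by simp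
  define ws' where "ws' = map nrm ws"
  have ws'c: "set ws' \<subseteq> carrier_vec n" using ws(2) by (auto simp: ws'_def nrm_def)
  have len': "length ws' = n" using ws(3) by (simp add: ws'_def)
  have wsi: "ws ! i \<in> carrier_vec n" if "i < n" for i using ws(2,3) that by (metis nth_mem subsetD)
  have ws'i: "ws' ! i \<in> carrier_vec n" if "i < n" for i using ws'c len' that by (metis nth_mem subsetD)
  have on: "ws' ! i \<bullet>c ws' ! j = (if i = j then 1 else 0)" if ij: "i < n" "j < n" for i j
  proof (cases "i = j")
    case True
    have "ws ! i \<bullet>c ws ! i \<noteq> 0" using corthogonalD[OF ws(1), of i i] ij ws(3) by auto
    then show ?thesis using True nrm_one ij ws(3) by (simp add: ws'_def)
  next
    case False
    have "ws ! i \<bullet>c ws ! j = 0" using corthogonalD[OF ws(1), of i j] ij ws(3) False by auto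
    moreover have "dim_vec (ws ! j) = dim_vec (ws ! i)" using wsi[OF ij(1)] wsi[OF ij(2)] by simp
    ultimately show ?thesis using False nrm_cip ij ws(3) by (simp add: ws'_def)
  qed
  have "ws ! 0 = u" using hdws ws(3) by (cases ws) (auto simp: n_def)
  then have ws'0: "ws' ! 0 = u" using ws(3) nrm_u by (simp add: ws'_def n_def)
  define U where "U = mat_of_cols n ws'"
  have U: "U \<in> carrier_mat n n" unfolding U_def using mat_of_cols_carrier(1)[of n ws'] len' by simp
  have Uidx: "U $$ (k, i) = ws' ! i $ k" if "k < n" "i < n" for k i using that len' by (simp add: U_def mat_of_cols_def)
  have UU: "adj U * U = 1\<^sub>m n"
  proof (rule eq_matI)
    fix i j assume "i < dim_row (1\<^sub>m n)" "j < dim_col (1\<^sub>m n)"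
    then have ij: "i < n" "j < n" by auto
    have "(adj U * U) $$ (i,j) = (\<Sum>k<n. cnj (U $$ (k,i)) * U $$ (k,j))"
      using U ij by (auto simp: scalar_prod_def lessThan_atLeast0 intro!: sum.cong)
    also have "\<dots> = ws' ! j \<bullet>c ws' ! i" using ij ws'i[OF ij(1)] ws'i[OF ij(2)]
      by (simp add: Uidx cip_sum[of _ n] mult.commute)
    also have "\<dots> = 1\<^sub>m n $$ (i,j)" using on[OF ij(2) ij(1)] ij by auto
    finally show "(adj U * U) $$ (i,j) = 1\<^sub>m n $$ (i,j)" .
  qed (use U in auto)
  have UU': "U * adj U = 1\<^sub>m n" by (rule mat_mult_left_right_inverse[OF adj_carrier[OF U] U UU])
  have e0: "unit_vec n 0 \<in> carrier_vec n" by simp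
  have Ue0: "U *\<^sub>v unit_vec n 0 = u"
  proof (rule eq_vecI)
    fix k assume "k < dim_vec u" then have k: "k < n" using u by simp
    have "(U *\<^sub>v unit_vec n 0) $ k = U $$ (k,0)" using U k by (simp add: n_def)
    also have "\<dots> = u $ k" using Uidx[OF k, of 0] ws'0 by (simp add: n_def)
    finally show "(U *\<^sub>v unit_vec n 0) $ k = u $ k" .
  qed (use U u in simp)
  define H' where "H' = adj U * H * U"
  have UH: "adj U * H \<in> carrier_mat n n" by (rule mult_carrier_mat[OF adj_carrier[OF U] H])
  have H': "H' \<in> carrier_mat n n" unfolding H'_def by (rule mult_carrier_mat[OF UH U])
  have H'herm: "adj H' = H'"
  proof -
    have "adj H' = adj U * adj (adj U * H)" unfolding H'_def by (rule adj_mult[OF UH U])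
    also have "adj (adj U * H) = H * U" using adj_mult[OF adj_carrier[OF U] H] herm by simp
    also have "adj U * (H * U) = H'" unfolding H'_def by (rule assoc_mult_mat[OF adj_carrier[OF U] H U, symmetric])
    finally show ?thesis .
  qed
  have H'e0: "H' *\<^sub>v unit_vec n 0 = e \<cdot>\<^sub>v unit_vec n 0"
  proof -
    have "H' *\<^sub>v unit_vec n 0 = adj U *\<^sub>v (H *\<^sub>v (U *\<^sub>v unit_vec n 0))"
      unfolding H'_def by (rule assoc3[OF U H e0])
    also have "\<dots> = adj U *\<^sub>v (e \<cdot>\<^sub>v u)" using Ue0 Hu by simp
    also have "\<dots> = e \<cdot>\<^sub>v (adj U *\<^sub>v (U *\<^sub>v unit_vec n 0))" using mult_mat_vec[OF adj_carrier[OF U] u, of e] Ue0 by simp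
    also have "\<dots> = e \<cdot>\<^sub>v ((adj U * U) *\<^sub>v unit_vec n 0)"
      using assoc_mult_mat_vec[OF adj_carrier[OF U] U e0] by simp
    also have "\<dots> = e \<cdot>\<^sub>v unit_vec n 0" using UU by simp
    finally show ?thesis .
  qed
  have col0: "H' $$ (i,0) = (if i = 0 then e else 0)" if i: "i < n" for i
  proof -
    have "(H' *\<^sub>v unit_vec n 0) $ i = H' $$ (i,0)" using H' i by (simp add: n_def)
    then have "e * (if i = 0 then 1 else 0) = H' $$ (i,0)" using H'e0 i by (simp add: n_def)
    then show ?thesis by (cases "i = 0") auto
  qed
  have row0: "H' $$ (0,j) = 0" if j: "0 < j" "j < n" for j
  proof -
    have "H' $$ (0,j) = adj H' $$ (0,j)" using H'herm by simp
    also have "\<dots> = cnj (H' $$ (j,0))" using H' j by simp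
    finally show ?thesis using col0[OF j(2)] j by simp
  qed
  define H'' where "H'' = mat m m (\<lambda>(i,j). H' $$ (Suc i, Suc j))"
  have H'': "H'' \<in> carrier_mat m m" by (simp add: H''_def)
  have H''herm: "adj H'' = H''"
  proof (rule eq_matI)
    fix i j assume "i < dim_row H''" "j < dim_col H''"
    then have ij: "i < m" "j < m" by (auto simp: H''_def)
    have "H' $$ (Suc j, Suc i) = adj H' $$ (Suc j, Suc i)" using H'herm by simp
    also have "\<dots> = cnj (H' $$ (Suc i, Suc j))" using H' ij by (simp add: n_def)
    finally show "adj H'' $$ (i,j) = H'' $$ (i,j)" using ij by (simp add: H''_def)
  qed (auto simp: H''_def)
  have ev'': "Re \<mu> \<le> 0" if y: "y \<in> carrier_vec m" "y \<noteq> 0\<^sub>v m" "H'' *\<^sub>v y = \<mu> \<cdot>\<^sub>v y" for y \<mu>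
  proof -
    define y' where "y' = vec n (\<lambda>i. if i = 0 then 0 else y $ (i - 1))"
    have y': "y' \<in> carrier_vec n" by (simp add: y'_def)
    have y'0: "y' \<noteq> 0\<^sub>v n"
    proof
      assume "y' = 0\<^sub>v n"
      have "y $ k = 0" if k: "k < m" for k
      proof -
        have "y' $ Suc k = 0\<^sub>v n $ Suc k" using \<open>y' = 0\<^sub>v n\<close> by simp
        then show ?thesis using k by (simp add: y'_def n_def)
      qed
      then have "y = 0\<^sub>v m" using y(1) by (intro eq_vecI) auto
      then show False using y(2) by simp
    qed
    have Hy': "H' *\<^sub>v y' = \<mu> \<cdot>\<^sub>v y'"
    proof (rule eq_vecI)
      fix i assume "i < dim_vec (\<mu> \<cdot>\<^sub>v y')" then have i: "i < n" by (simp add: y'_def)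
      have "(H' *\<^sub>v y') $ i = (\<Sum>k<n. H' $$ (i,k) * y' $ k)" by (rule mv_idx[OF H' y' i])
      also have "\<dots> = (\<Sum>k<m. H' $$ (i, Suc k) * y $ k)"
        unfolding n_def sum.lessThan_Suc_shift by (simp add: y'_def n_def)
      also have "\<dots> = (\<mu> \<cdot>\<^sub>v y') $ i"
      proof (cases i)
        case 0
        then show ?thesis using row0 by (simp add: y'_def n_def)
      next
        case (Suc i')
        then have i': "i' < m" using i by (simp add: n_def)
        have "(\<Sum>k<m. H' $$ (i, Suc k) * y $ k) = (H'' *\<^sub>v y) $ i'"
          using mv_idx[OF H'' y(1) i'] Suc i' by (simp add: H''_def)
        also have "\<dots> = \<mu> * y $ i'" using y(3) y(1) i' by simp
        finally show ?thesis using Suc i by (simp add: y'_def)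
      qed
      finally show "(H' *\<^sub>v y') $ i = (\<mu> \<cdot>\<^sub>v y') $ i" .
    qed (use H' y' in simp)
    define w where "w = U *\<^sub>v y'"
    have w: "w \<in> carrier_vec n" using U y' by (simp add: w_def)
    have "adj U *\<^sub>v w = (adj U * U) *\<^sub>v y'" unfolding w_def by (rule assoc_mult_mat_vec[OF adj_carrier[OF U] U y', symmetric])
    also have "\<dots> = y'" using UU y' by simp
    finally have "w \<noteq> 0\<^sub>v n" using y'0 U by (auto intro!: eq_vecI simp: scalar_prod_def)
    moreover have "H *\<^sub>v w = \<mu> \<cdot>\<^sub>v w"
    proof -
      have "U * H' = (U * adj U) * (H * U)"
        unfolding H'_def using U H
        by (simp add: assoc_mult_mat[OF U adj_carrier[OF U] mult_carrier_mat[OF H U]]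
              assoc_mult_mat[OF adj_carrier[OF U] H U] assoc_mult_mat[OF U UH U])
      also have "\<dots> = H * U" using UU' H U by simp
      finally have HU: "H * U = U * H'" by simp
      have "H *\<^sub>v w = (H * U) *\<^sub>v y'" unfolding w_def by (rule assoc_mult_mat_vec[OF H U y', symmetric])
      also have "\<dots> = U *\<^sub>v (H' *\<^sub>v y')" unfolding HU by (rule assoc_mult_mat_vec[OF U H' y'])
      also have "\<dots> = \<mu> \<cdot>\<^sub>v w" using mult_mat_vec[OF U y', of \<mu>] by (simp add: Hy' w_def)
      finally show ?thesis .
    qed
    ultimately show ?thesis using ev w by blast
  qed
  have IH: "Re ((H'' *\<^sub>v y) \<bullet>c y) \<le> 0" if "y \<in> carrier_vec m" for y
  proof (rule Suc.hyps[OF H'' H''herm])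
    fix e v assume "v \<in> carrier_vec m" "v \<noteq> 0\<^sub>v m" "H'' *\<^sub>v v = e \<cdot>\<^sub>v v"
    then show "Re e \<le> 0" by (rule ev'')
  qed (rule that)
  define z where "z = adj U *\<^sub>v x"
  have z: "z \<in> carrier_vec n" using U x by (simp add: z_def)
  have xz: "x = U *\<^sub>v z"
    using assoc_mult_mat_vec[OF U adj_carrier[OF U] x] UU' x by (simp add: z_def)
  have "(H *\<^sub>v x) \<bullet>c x = (adj U *\<^sub>v (H *\<^sub>v (U *\<^sub>v z))) \<bullet>c z"
    using cip_adj2[OF U _ z, of "H *\<^sub>v (U *\<^sub>v z)"] H U z xz by simp
  also have "\<dots> = (H' *\<^sub>v z) \<bullet>c z" unfolding H'_def by (simp add: assoc3[OF U H z])
  finally have eqH: "(H *\<^sub>v x) \<bullet>c x = (H' *\<^sub>v z) \<bullet>c z" .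
  define y where "y = vec m (\<lambda>i. z $ Suc i)"
  have y: "y \<in> carrier_vec m" by (simp add: y_def)
  define f where "f = (\<lambda>i. \<Sum>k<n. H' $$ (i,k) * z $ k)"
  have f0: "f 0 = e * z $ 0"
    unfolding f_def n_def sum.lessThan_Suc_shift using col0 row0 by (simp add: n_def)
  have fS: "f (Suc i) = (H'' *\<^sub>v y) $ i" if i: "i < m" for i
  proof -
    have "f (Suc i) = (\<Sum>k<m. H' $$ (Suc i, Suc k) * z $ Suc k)"
      unfolding f_def n_def sum.lessThan_Suc_shift using col0[of "Suc i"] i by (simp add: n_def)
    also have "\<dots> = (H'' *\<^sub>v y) $ i" using mv_idx[OF H'' y i] i by (simp add: H''_def y_def)
    finally show ?thesis .
  qed
  have "(H' *\<^sub>v z) \<bullet>c z = (\<Sum>i<n. (H' *\<^sub>v z) $ i * cnj (z $ i))"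
    by (rule cip_sum[OF mv_carrier[OF H' z] z])
  also have "\<dots> = (\<Sum>i<n. f i * cnj (z $ i))"
  proof (rule sum.cong)
    fix i assume "i \<in> {..<n}"
    then show "(H' *\<^sub>v z) $ i * cnj (z $ i) = f i * cnj (z $ i)" using mv_idx[OF H' z, of i] by (simp add: f_def)
  qed simp
  also have "\<dots> = e * (z $ 0 * cnj (z $ 0)) + (\<Sum>i<m. (H'' *\<^sub>v y) $ i * cnj (y $ i))"
    unfolding n_def sum.lessThan_Suc_shift using f0 fS by (simp add: y_def)
  also have "(\<Sum>i<m. (H'' *\<^sub>v y) $ i * cnj (y $ i)) = (H'' *\<^sub>v y) \<bullet>c y"
    using H'' y by (simp add: cip_sum[of _ m])
  finally have dec: "(H *\<^sub>v x) \<bullet>c x = e * (z $ 0 * cnj (z $ 0)) + (H'' *\<^sub>v y) \<bullet>c y" using eqH by simp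
  have "Re (e * (z $ 0 * cnj (z $ 0))) = Re e * (cmod (z $ 0))\<^sup>2"
    by (simp flip: complex_norm_square)
  also have "\<dots> \<le> 0" using Ree by (simp add: mult_nonpos_nonneg)
  finally show ?case using dec IH[OF y] unfolding n_def[symmetric] by simp
qed

lemma edge_lin:
  fixes f fa fb :: "real \<Rightarrow> complex" and I :: "real set"
  assumes I: "\<And>x. x \<in> I \<Longrightarrow> 0 \<le> x \<and> {0..x} \<subseteq> I"
    and ae: "AE x in lborel. x \<in> I \<longrightarrow> fb x = 0"
    and rep: "\<forall>x\<in>I. f x = f 0 + (LBINT t:{0..x}. fa t) \<and> fa x = fa 0 + (LBINT t:{0..x}. fb t)"
    and x: "x \<in> I"
  shows "fa x = fa 0 \<and> f x = f 0 + of_real x * fa 0"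
proof -
  have z2: "(LBINT t:{0..y}. fb t) = 0" if y: "y \<in> I" for y
  proof -
    have "AE t in lborel. indicator {0..y} t *\<^sub>R fb t = 0"
      using ae by eventually_elim (use I[OF y] in \<open>auto simp: indicator_def\<close>)
    then show ?thesis unfolding set_lebesgue_integral_def by (rule integral_eq_zero_AE)
  qed
  have c1: "fa y = fa 0" if "y \<in> I" for y using rep z2 that by auto
  have x0: "0 \<le> x" and sub: "{0..x} \<subseteq> I" using I[OF x] by auto
  have "(LBINT t:{0..x}. fa t) = (LBINT t:{0..x}. fa 0)"
    by (rule set_lebesgue_integral_cong) (use sub c1 in auto)
  also have "\<dots> = measure lborel {0..x} *\<^sub>R fa 0"
    by (rule set_integral_const) (use x0 in auto)
  also have "measure lborel {0..x} = x" using x0 by (simp add: measure_def)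
  finally have "(LBINT t:{0..x}. fa t) = of_real x * fa 0" by (simp add: scaleR_conv_of_real)
  then show ?thesis using rep x c1[OF x] by auto
qed

lemma ext_zero:
  fixes f :: "real \<Rightarrow> complex"
  assumes int: "integrable lborel (\<lambda>x. indicator {0..} x *\<^sub>R (cmod (f x))\<^sup>2)"
    and lin: "\<And>x. 0 \<le> x \<Longrightarrow> f x = c + of_real x * d"
  shows "c = 0 \<and> d = 0"
proof (rule ccontr)
  assume nz: "\<not> (c = 0 \<and> d = 0)"
  define g where "g = (\<lambda>x. indicator {0..} x *\<^sub>R (cmod (f x))\<^sup>2)"
  obtain X \<epsilon> where X: "0 \<le> X" and eps: "\<epsilon> > 0" and bnd: "\<And>x. X \<le> x \<Longrightarrow> \<epsilon> \<le> (cmod (f x))\<^sup>2"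
  proof (cases "d = 0")
    case True
    then have "c \<noteq> 0" using nz by simp
    then show ?thesis using that[of 0 "(cmod c)\<^sup>2"] lin True by auto
  next
    case False
    define X where "X = (cmod c + 1) / cmod d"
    have X0: "0 \<le> X" by (simp add: X_def)
    have "1 \<le> (cmod (f x))\<^sup>2" if x: "X \<le> x" for x
    proof -
      have x0: "0 \<le> x" using X0 x by simp
      have "cmod c + 1 \<le> x * cmod d" using x False by (simp add: X_def field_simps)
      also have "x * cmod d = cmod (of_real x * d)" using x0 by (simp add: norm_mult)
      also have "\<dots> \<le> cmod (c + of_real x * d) + cmod c"
        by (metis add.commute add_diff_cancel_right' norm_triangle_ineq4)
      finally have "1 \<le> cmod (f x)" using lin[OF x0] by simp
      then show ?thesis by (simp add: one_le_power)
    qed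
    then show ?thesis using that[of X 1] X0 by auto
  qed
  have gpos: "0 \<le> g x" for x by (simp add: g_def)
  have "\<epsilon> * r \<le> integral\<^sup>L lborel g" if r: "0 \<le> r" for r
  proof -
    have "integral\<^sup>L lborel (\<lambda>x. \<epsilon> * indicator {X..X+r} x) \<le> integral\<^sup>L lborel g"
    proof (rule integral_mono)
      show "integrable lborel (\<lambda>x. \<epsilon> * indicator {X..X+r} x)"
        using r by (intro integrable_mult_right integrable_real_indicator) auto
      show "integrable lborel g" using int by (simp add: g_def)
      fix x show "\<epsilon> * indicator {X..X+r} x \<le> g x"
        using bnd[of x] X gpos[of x] eps by (auto simp: g_def indicator_def)
    qed
    also have "integral\<^sup>L lborel (\<lambda>x. \<epsilon> * indicator {X..X+r} x) = \<epsilon> * r"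
      using r by (simp add: measure_def)
    finally show ?thesis .
  qed
  from this[of "(integral\<^sup>L lborel g + 1) / \<epsilon>"] eps
  have "integral\<^sup>L lborel g + 1 \<le> integral\<^sup>L lborel g"
    using integral_nonneg_AE[of g lborel] gpos by (auto simp: field_simps)
  then show False by simp
qed

lemma vs_fscale: "Vector_Spaces.vector_space fscale"
  by unfold_locales (auto simp: fscale_def fun_eq_iff algebra_simps)

lemma sum_lessThan_add: fixes a b :: nat shows "(\<Sum>k<a + b. f k) = (\<Sum>k<a. f k) + (\<Sum>k<b. f (a + k))"
  by (induct b) (simp_all add: ac_simps)

lemma sum_split3: fixes nE nI :: nat shows "(\<Sum>k<nE + 2 * nI. f k) = (\<Sum>k<nE. f k) + (\<Sum>i<nI. f (nE + i)) + (\<Sum>i<nI. f (nE + nI + i))"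
proof -
  have "nE + 2 * nI = nE + (nI + nI)" by simp
  then have "(\<Sum>k<nE + 2 * nI. f k) = (\<Sum>k<nE. f k) + (\<Sum>k<nI + nI. f (nE + k))"
    by (simp only: sum_lessThan_add)
  also have "(\<Sum>k<nI + nI. f (nE + k)) = (\<Sum>i<nI. f (nE + i)) + (\<Sum>i<nI. f (nE + (nI + i)))"
    by (rule sum_lessThan_add)
  finally show ?thesis by (simp add: add.assoc)
qed

lemma ip_formula:
  fixes c d :: "nat \<Rightarrow> complex" and a :: "nat \<Rightarrow> real" and nE nI :: nat
  defines "g1 \<equiv> (\<lambda>k. if k < nE then 0 else if k < nE + nI then c (k - nE)
                   else c (k - nE - nI) + of_real (a (k - nE - nI)) * d (k - nE - nI))"
    and "g2 \<equiv> (\<lambda>k. if k < nE then 0 else if k < nE + nI then d (k - nE) else - d (k - nE - nI))"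
  shows "vec (nE + 2 * nI) g2 \<bullet>c vec (nE + 2 * nI) g1 = - (\<Sum>i<nI. of_real (a i) * (d i * cnj (d i)))"
proof -
  let ?n = "nE + 2 * nI"
  have "vec ?n g2 \<bullet>c vec ?n g1 = (\<Sum>k<?n. g2 k * cnj (g1 k))"
    by (simp add: cip_sum[of _ ?n])
  also have "\<dots> = (\<Sum>k<nE. g2 k * cnj (g1 k)) + (\<Sum>i<nI. g2 (nE + i) * cnj (g1 (nE + i)))
      + (\<Sum>i<nI. g2 (nE + nI + i) * cnj (g1 (nE + nI + i)))"
    by (rule sum_split3)
  also have "(\<Sum>k<nE. g2 k * cnj (g1 k)) = 0" by (simp add: g2_def)
  also have "(\<Sum>i<nI. g2 (nE + i) * cnj (g1 (nE + i))) = (\<Sum>i<nI. d i * cnj (c i))"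
    by (rule sum.cong) (auto simp: g1_def g2_def)
  also have "(\<Sum>i<nI. g2 (nE + nI + i) * cnj (g1 (nE + nI + i)))
      = (\<Sum>i<nI. - d i * cnj (c i + of_real (a i) * d i))"
    by (rule sum.cong) (auto simp: g1_def g2_def)
  finally have "vec ?n g2 \<bullet>c vec ?n g1 = (\<Sum>i<nI. d i * cnj (c i) + - d i * cnj (c i + of_real (a i) * d i))"
    by (simp add: sum_subtractf sum_negf)
  also have "\<dots> = (\<Sum>i<nI. - (of_real (a i) * (d i * cnj (d i))))"
    by (rule sum.cong) (auto simp: algebra_simps)
  finally show ?thesis by (simp add: sum_negf)
qed

lemma ev_nonpos:
  fixes H :: "complex mat"
  assumes H: "H \<in> carrier_mat n n" and herm: "adj H = H" and np: "n_plus H = 0"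
    and v: "v \<in> carrier_vec n" "v \<noteq> 0\<^sub>v n" "H *\<^sub>v v = e \<cdot>\<^sub>v v"
  shows "Re e \<le> 0"
proof (rule ccontr)
  assume pos: "\<not> Re e \<le> 0"
  have vv: "v \<bullet>c v \<noteq> 0" using cip_self_zero[of v] v by auto
  have "e * (v \<bullet>c v) = (H *\<^sub>v v) \<bullet>c v" using v by (simp add: cip_smult_left)
  also have "\<dots> = v \<bullet>c (adj H *\<^sub>v v)" by (rule cip_adj[OF H v(1) v(1)])
  also have "\<dots> = cnj e * (v \<bullet>c v)" using v herm by (simp add: cip_smult_right)
  finally have "e = cnj e" using vv by simp
  then have im: "Im e = 0" by (metis cnj.sel(2) neg_equal_zero)
  have ev: "eigenvalue H e" using v H unfolding eigenvalue_def eigenvector_def by auto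
  have cp0: "char_poly H \<noteq> 0" using degree_monic_char_poly[OF H] by auto
  let ?P = "{k. eigenvalue H k \<and> Im k = 0 \<and> Re k > 0}"
  have "?P \<subseteq> {k. poly (char_poly H) k = 0}" using eigenvalue_root_char_poly[OF H] by auto
  then have fin: "finite ?P" using poly_roots_finite[OF cp0] finite_subset by blast
  have eP: "e \<in> ?P" using ev im pos by auto
  have "poly (char_poly H) e = 0" using ev eigenvalue_root_char_poly[OF H] by auto
  then have "Polynomial.order e (char_poly H) \<noteq> 0" using cp0 order_root by blast
  moreover have "Polynomial.order e (char_poly H) \<le> n_plus H"
    unfolding n_plus_def by (rule member_le_sum[OF eP _ fin]) auto
  ultimately show False using np by simp
qed

lemma lin_coord:
  fixes B :: "complex mat"
  assumes B: "B \<in> carrier_mat n n" and Bs: "finite Bs" "Bs \<subseteq> carrier_vec n"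
    and phi: "\<phi> \<in> carrier_vec n" and rep: "\<forall>l<n. \<phi> $ l = (\<Sum>b\<in>Bs. \<alpha> b * b $ l)"
    and k: "k < n"
  shows "(- (adj B *\<^sub>v \<phi>)) $ k = (\<Sum>b\<in>Bs. \<alpha> b * (- (adj B *\<^sub>v b)) $ k)"
proof -
  have "(adj B *\<^sub>v \<phi>) $ k = (\<Sum>l<n. cnj (B $$ (l,k)) * \<phi> $ l)" by (rule adj_mult_vec_index[OF B phi k])
  also have "\<dots> = (\<Sum>l<n. \<Sum>b\<in>Bs. \<alpha> b * (cnj (B $$ (l,k)) * b $ l))"
    using rep by (simp add: sum_distrib_left mult_ac)
  also have "\<dots> = (\<Sum>b\<in>Bs. \<alpha> b * (\<Sum>l<n. cnj (B $$ (l,k)) * b $ l))"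
    by (subst sum.swap) (simp add: sum_distrib_left)
  also have "\<dots> = (\<Sum>b\<in>Bs. \<alpha> b * (adj B *\<^sub>v b) $ k)"
    using Bs by (intro sum.cong refl) (auto simp: adj_mult_vec_index[OF B _ k])
  finally have "(adj B *\<^sub>v \<phi>) $ k = (\<Sum>b\<in>Bs. \<alpha> b * (adj B *\<^sub>v b) $ k)" .
  moreover have "(- (adj B *\<^sub>v b)) $ k = - (adj B *\<^sub>v b) $ k" if "b \<in> carrier_vec n" for b
    using that B k by simp
  ultimately show ?thesis using phi B k Bs by (auto simp: sum_negf intro!: sum.cong)
qed

lemma sum_fun_apply2: "(sum f S) j x = (\<Sum>s\<in>S. f s j x)"
  by (induct S rule: infinite_finite_induct) auto

lemma ker_elem:
  assumes a_pos: "\<And>i. i < nI \<Longrightarrow> a i > 0" and psi: "\<psi> \<in> Delta_ker nE nI a A B"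
  obtains \<psi>1 where "A *\<^sub>v bval nE nI a \<psi> + B *\<^sub>v bder nE nI a \<psi>1 = 0\<^sub>v (nE + 2 * nI)"
    "\<And>e x. e < nE \<Longrightarrow> \<psi> (Inl e) x = 0" "\<And>e. e < nE \<Longrightarrow> \<psi>1 (Inl e) 0 = 0"
    "\<And>i x. i < nI \<Longrightarrow> x \<in> {0..a i} \<Longrightarrow>
        \<psi> (Inr i) x = \<psi> (Inr i) 0 + of_real x * \<psi>1 (Inr i) 0 \<and> \<psi>1 (Inr i) x = \<psi>1 (Inr i) 0"
    "\<And>i x. i < nI \<Longrightarrow> x \<notin> {0..a i} \<Longrightarrow> \<psi> (Inr i) x = 0"
    "\<And>j. j \<notin> edges nE nI \<Longrightarrow> \<psi> j = (\<lambda>x. 0)"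
proof -
  from psi obtain \<psi>1 \<psi>2 where dom: "in_dom nE nI a \<psi> \<psi>1 \<psi>2"
    and bc: "A *\<^sub>v bval nE nI a \<psi> + B *\<^sub>v bder nE nI a \<psi>1 = 0\<^sub>v (nE + 2 * nI)"
    and ae: "\<forall>j\<in>edges nE nI. AE x in lborel. x \<in> edge_interval a j \<longrightarrow> \<psi>2 j x = 0"
    unfolding Delta_ker_def by blast
  have lin: "\<psi>1 j x = \<psi>1 j 0 \<and> \<psi> j x = \<psi> j 0 + of_real x * \<psi>1 j 0"
    if j: "j \<in> edges nE nI" and x: "x \<in> edge_interval a j" for j x
  proof (rule edge_lin[where I = "edge_interval a j" and fb = "\<psi>2 j"])
    show "\<And>x. x \<in> edge_interval a j \<Longrightarrow> 0 \<le> x \<and> {0..x} \<subseteq> edge_interval a j"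
      by (auto simp: edge_interval_def split: sum.splits)
    show "AE x in lborel. x \<in> edge_interval a j \<longrightarrow> \<psi>2 j x = 0" using ae j by blast
    show "\<forall>x\<in>edge_interval a j. \<psi> j x = \<psi> j 0 + (LBINT t:{0..x}. \<psi>1 j t) \<and>
        \<psi>1 j x = \<psi>1 j 0 + (LBINT t:{0..x}. \<psi>2 j t)"
      using dom j unfolding in_dom_def by blast
  qed (rule x)
  have outside: "\<psi> j x = 0" if "j \<in> edges nE nI" "x \<notin> edge_interval a j" for j x
    using dom that unfolding in_dom_def by blast
  have notedge: "\<psi> j = (\<lambda>x. 0)" if "j \<notin> edges nE nI" for j
    using dom that unfolding in_dom_def by blast
  have ext: "\<psi> (Inl e) 0 = 0 \<and> \<psi>1 (Inl e) 0 = 0" if e: "e < nE" for e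
  proof (rule ext_zero[where f = "\<psi> (Inl e)"])
    have je: "Inl e \<in> edges nE nI" using e by (simp add: edges_def)
    have "L2_on (edge_interval a (Inl e)) (\<psi> (Inl e))" using dom je unfolding in_dom_def by blast
    then show "integrable lborel (\<lambda>x. indicator {0..} x *\<^sub>R (cmod (\<psi> (Inl e) x))\<^sup>2)"
      by (simp add: L2_on_def set_integrable_def edge_interval_def)
    show "\<psi> (Inl e) x = \<psi> (Inl e) 0 + of_real x * \<psi>1 (Inl e) 0" if "0 \<le> x" for x
      using lin[OF je, of x] that by (simp add: edge_interval_def)
  qed
  show ?thesis
  proof (rule that[of \<psi>1])
    show "A *\<^sub>v bval nE nI a \<psi> + B *\<^sub>v bder nE nI a \<psi>1 = 0\<^sub>v (nE + 2 * nI)" by (rule bc)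
    show "\<psi> (Inl e) x = 0" if e: "e < nE" for e x
    proof (cases "0 \<le> x")
      case True
      have je: "Inl e \<in> edges nE nI" using e by (simp add: edges_def)
      then show ?thesis using lin[OF je, of x] ext[OF e] True by (simp add: edge_interval_def)
    next
      case False
      have je: "Inl e \<in> edges nE nI" using e by (simp add: edges_def)
      then show ?thesis using outside[OF je, of x] False by (simp add: edge_interval_def)
    qed
    show "\<psi>1 (Inl e) 0 = 0" if "e < nE" for e using ext[OF that] by simp
    show "\<psi> (Inr i) x = \<psi> (Inr i) 0 + of_real x * \<psi>1 (Inr i) 0 \<and> \<psi>1 (Inr i) x = \<psi>1 (Inr i) 0"
      if "i < nI" "x \<in> {0..a i}" for i x
      using lin[of "Inr i" x] that by (simp add: edges_def edge_interval_def)
    show "\<psi> (Inr i) x = 0" if "i < nI" "x \<notin> {0..a i}" for i x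
      using outside[of "Inr i" x] that by (simp add: edges_def edge_interval_def)
    show "\<psi> j = (\<lambda>x. 0)" if "j \<notin> edges nE nI" for j using notedge[OF that] .
  qed
qed

lemma cip_uminus_right: "dim_vec y = dim_vec x \<Longrightarrow> x \<bullet>c (- y) = - (x \<bullet>c (y :: complex vec))"
  by (simp add: scalar_prod_def sum_negf)

theorem proposition3p9:
  fixes nE nI :: nat and a :: "nat \<Rightarrow> real" and A B :: "complex mat"
  assumes a_pos: "\<And>i. i < nI \<Longrightarrow> a i > 0"
    and A_dim: "A \<in> carrier_mat (nE + 2 * nI) (nE + 2 * nI)"
    and B_dim: "B \<in> carrier_mat (nE + 2 * nI) (nE + 2 * nI)"
    and rank_AB: "vec_space.rank (nE + 2 * nI) (mat_of_cols (nE + 2 * nI) (cols A @ cols B))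
                    = nE + 2 * nI"
    and selfadj: "mat_adjoint (A * mat_adjoint B) = A * mat_adjoint B"
    and n_plus_0: "n_plus (A * mat_adjoint B) = 0"
  shows "(\<exists>S. finite S \<and> Delta_ker nE nI a A B \<subseteq> Modules.module.span fscale S) \<and>
         Vector_Spaces.vector_space.dim fscale (Delta_ker nE nI a A B) \<le> n_zero (A * mat_adjoint B)"
proof -
  define n where "n = nE + 2 * nI"
  define H where "H = A * mat_adjoint B"
  have A: "A \<in> carrier_mat n n" using A_dim by (simp add: n_def)
  have B: "B \<in> carrier_mat n n" using B_dim by (simp add: n_def)
  have H: "H \<in> carrier_mat n n" unfolding H_def by (rule mult_carrier_mat[OF A adj_carrier[OF B]])
  have herm: "adj H = H" using selfadj by (simp add: H_def)
  have HBA: "H = B * adj A" using herm adj_mult[OF A adj_carrier[OF B]] by (simp add: H_def)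
  have np: "n_plus H = 0" using n_plus_0 by (simp add: H_def)
  have orth: "x = 0\<^sub>v n" if "x \<in> carrier_vec n" "adj A *\<^sub>v x = 0\<^sub>v n" "adj B *\<^sub>v x = 0\<^sub>v n" for x
    by (rule rank_full_orth[OF A B _ that]) (use rank_AB in \<open>simp add: n_def\<close>)
  have Hneg: "Re ((H *\<^sub>v x) \<bullet>c x) \<le> 0" if x: "x \<in> carrier_vec n" for x
  proof (rule herm_nonpos[OF H herm _ x])
    fix e v assume "v \<in> carrier_vec n" "v \<noteq> 0\<^sub>v n" "H *\<^sub>v v = e \<cdot>\<^sub>v v"
    then show "Re e \<le> 0" by (rule ev_nonpos[OF H herm np])
  qed
  obtain Bs where Bs: "finite Bs" "Bs \<subseteq> mat_kernel H" "card Bs \<le> n_zero H"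
    and Bsp: "\<And>v. v \<in> mat_kernel H \<Longrightarrow> \<exists>\<alpha>. \<forall>i<n. v $ i = (\<Sum>b\<in>Bs. \<alpha> b * b $ i)"
    using kernel_basis_list[OF H] by blast
  have Bsc: "Bs \<subseteq> carrier_vec n" using Bs(2) mat_kernel_carrier[OF H] by blast
  define G where "G = (\<lambda>b :: complex vec. \<lambda>(j :: edge) (x :: real). case j of Inl e \<Rightarrow> (0 :: complex)
     | Inr i \<Rightarrow> if i < nI \<and> x \<in> {0..a i} then (- (adj B *\<^sub>v b)) $ (nE + i) else 0)"
  define S where "S = G ` Bs"
  interpret VS: vector_space fscale by (rule vs_fscale)
  have key: "Delta_ker nE nI a A B \<subseteq> VS.span S"
  proof
    fix \<psi> assume psi: "\<psi> \<in> Delta_ker nE nI a A B"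
    have "\<exists>\<psi>1. A *\<^sub>v bval nE nI a \<psi> + B *\<^sub>v bder nE nI a \<psi>1 = 0\<^sub>v (nE + 2 * nI) \<and>
      (\<forall>e x. e < nE \<longrightarrow> \<psi> (Inl e) x = 0) \<and> (\<forall>e. e < nE \<longrightarrow> \<psi>1 (Inl e) 0 = 0) \<and>
      (\<forall>i x. i < nI \<longrightarrow> x \<in> {0..a i} \<longrightarrow>
        \<psi> (Inr i) x = \<psi> (Inr i) 0 + of_real x * \<psi>1 (Inr i) 0 \<and> \<psi>1 (Inr i) x = \<psi>1 (Inr i) 0) \<and>
      (\<forall>i x. i < nI \<longrightarrow> x \<notin> {0..a i} \<longrightarrow> \<psi> (Inr i) x = 0) \<and>
      (\<forall>j. j \<notin> edges nE nI \<longrightarrow> \<psi> j = (\<lambda>x. 0))"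
      by (rule ker_elem[of nI a \<psi> nE A B], erule a_pos, rule psi, rule exI, intro conjI allI impI) (assumption | blast)+
    then obtain \<psi>1 where all: "A *\<^sub>v bval nE nI a \<psi> + B *\<^sub>v bder nE nI a \<psi>1 = 0\<^sub>v (nE + 2 * nI) \<and>
      (\<forall>e x. e < nE \<longrightarrow> \<psi> (Inl e) x = 0) \<and> (\<forall>e. e < nE \<longrightarrow> \<psi>1 (Inl e) 0 = 0) \<and>
      (\<forall>i x. i < nI \<longrightarrow> x \<in> {0..a i} \<longrightarrow>
        \<psi> (Inr i) x = \<psi> (Inr i) 0 + of_real x * \<psi>1 (Inr i) 0 \<and> \<psi>1 (Inr i) x = \<psi>1 (Inr i) 0) \<and>
      (\<forall>i x. i < nI \<longrightarrow> x \<notin> {0..a i} \<longrightarrow> \<psi> (Inr i) x = 0) \<and>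
      (\<forall>j. j \<notin> edges nE nI \<longrightarrow> \<psi> j = (\<lambda>x. 0))" ..
    have bc: "A *\<^sub>v bval nE nI a \<psi> + B *\<^sub>v bder nE nI a \<psi>1 = 0\<^sub>v (nE + 2 * nI)" using all by simp
    have extl: "\<And>e x. e < nE \<Longrightarrow> \<psi> (Inl e) x = 0" using all by simp
    have extl1: "\<And>e. e < nE \<Longrightarrow> \<psi>1 (Inl e) 0 = 0" using all by simp
    have inr: "\<And>i x. i < nI \<Longrightarrow> x \<in> {0..a i} \<Longrightarrow>
        \<psi> (Inr i) x = \<psi> (Inr i) 0 + of_real x * \<psi>1 (Inr i) 0 \<and> \<psi>1 (Inr i) x = \<psi>1 (Inr i) 0"
      using all by blast
    have outr: "\<And>i x. i < nI \<Longrightarrow> x \<notin> {0..a i} \<Longrightarrow> \<psi> (Inr i) x = 0" using all by blast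
    have noe: "\<And>j. j \<notin> edges nE nI \<Longrightarrow> \<psi> j = (\<lambda>x. 0)" using all by blast
    define c where "c = (\<lambda>i. \<psi> (Inr i) 0)"
    define d where "d = (\<lambda>i. \<psi>1 (Inr i) 0)"
    define g1 where "g1 = (\<lambda>k. if k < nE then 0 else if k < nE + nI then c (k - nE)
                   else c (k - nE - nI) + of_real (a (k - nE - nI)) * d (k - nE - nI))"
    define g2 where "g2 = (\<lambda>k. if k < nE then 0 else if k < nE + nI then d (k - nE) else - d (k - nE - nI))"
    have ai: "a i \<in> {0..a i}" if "i < nI" for i using a_pos[OF that] by simp
    have bv: "bval nE nI a \<psi> = vec n g1"
    proof (rule eq_vecI)
      fix k assume "k < dim_vec (vec n g1)" then have k: "k < n" by simp
      consider "k < nE" | "nE \<le> k" "k < nE + nI" | "nE + nI \<le> k" by linarith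
      then show "bval nE nI a \<psi> $ k = vec n g1 $ k"
      proof cases
        case 1 then show ?thesis using k extl by (simp add: bval_def n_def g1_def)
      next
        case 2 then show ?thesis using k by (simp add: bval_def n_def g1_def c_def)
      next
        case 3
        define i where "i = k - nE - nI"
        have i: "i < nI" using 3 k by (simp add: i_def n_def)
        have "k - nE - nI = i" by (simp add: i_def)
        then show ?thesis using 3 k inr[OF i ai[OF i]] by (simp add: bval_def n_def g1_def c_def d_def)
      qed
    qed (simp add: bval_def n_def)
    have bd: "bder nE nI a \<psi>1 = vec n g2"
    proof (rule eq_vecI)
      fix k assume "k < dim_vec (vec n g2)" then have k: "k < n" by simp
      consider "k < nE" | "nE \<le> k" "k < nE + nI" | "nE + nI \<le> k" by linarith
      then show "bder nE nI a \<psi>1 $ k = vec n g2 $ k"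
      proof cases
        case 1 then show ?thesis using k extl1 by (simp add: bder_def n_def g2_def)
      next
        case 2 then show ?thesis using k by (simp add: bder_def n_def g2_def d_def)
      next
        case 3
        define i where "i = k - nE - nI"
        have i: "i < nI" using 3 k by (simp add: i_def n_def)
        have "k - nE - nI = i" by (simp add: i_def)
        then show ?thesis using 3 k inr[OF i ai[OF i]] by (simp add: bder_def n_def g2_def d_def)
      qed
    qed (simp add: bder_def n_def)
    have c1: "vec n g1 \<in> carrier_vec n" and c2: "vec n g2 \<in> carrier_vec n" by auto
    have bc': "A *\<^sub>v vec n g1 + B *\<^sub>v vec n g2 = 0\<^sub>v n" using bc bv bd by (simp add: n_def)
    have "\<exists>\<phi>\<in>carrier_vec n. vec n g1 = - (adj B *\<^sub>v \<phi>) \<and> vec n g2 = adj A *\<^sub>v \<phi>"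
      by (rule represent[OF A B selfadj _ c1 c2 bc']) (rule orth, assumption+)
    then obtain \<phi> where phi: "\<phi> \<in> carrier_vec n" "vec n g1 = - (adj B *\<^sub>v \<phi>)" "vec n g2 = adj A *\<^sub>v \<phi>"
      by blast
    have ip: "vec n g2 \<bullet>c vec n g1 = - (\<Sum>i<nI. of_real (a i) * (d i * cnj (d i)))"
      unfolding n_def g1_def g2_def by (rule ip_formula)
    have aBphi: "adj B *\<^sub>v \<phi> \<in> carrier_vec n" using B phi by simp
    have aAphi: "adj A *\<^sub>v \<phi> \<in> carrier_vec n" using A phi by simp
    have "vec n g2 \<bullet>c vec n g1 = (adj A *\<^sub>v \<phi>) \<bullet>c (- (adj B *\<^sub>v \<phi>))" using phi by simp
    also have "\<dots> = - ((adj A *\<^sub>v \<phi>) \<bullet>c (adj B *\<^sub>v \<phi>))" by (rule cip_uminus_right) (use A B in auto)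
    also have "(adj A *\<^sub>v \<phi>) \<bullet>c (adj B *\<^sub>v \<phi>) = \<phi> \<bullet>c (A *\<^sub>v (adj B *\<^sub>v \<phi>))"
      using cip_adj[OF adj_carrier[OF A] phi(1) aBphi] by simp
    also have "A *\<^sub>v (adj B *\<^sub>v \<phi>) = H *\<^sub>v \<phi>"
      unfolding H_def by (rule assoc_mult_mat_vec[OF A adj_carrier[OF B] phi(1), symmetric])
    also have "\<phi> \<bullet>c (H *\<^sub>v \<phi>) = cnj ((H *\<^sub>v \<phi>) \<bullet>c \<phi>)" using H phi by (subst cip_comm) auto
    finally have "Re (vec n g2 \<bullet>c vec n g1) = - Re ((H *\<^sub>v \<phi>) \<bullet>c \<phi>)" by simp
    then have "0 \<le> Re (vec n g2 \<bullet>c vec n g1)" using Hneg[OF phi(1)] by simp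
    also have "Re (vec n g2 \<bullet>c vec n g1) = - (\<Sum>i<nI. a i * (cmod (d i))\<^sup>2)"
      unfolding ip by (simp flip: complex_norm_square)
    finally have s0: "(\<Sum>i<nI. a i * (cmod (d i))\<^sup>2) \<le> 0" by simp
    have nn: "\<forall>i\<in>{..<nI}. 0 \<le> a i * (cmod (d i))\<^sup>2"
      using a_pos by (metis lessThan_iff less_imp_le zero_le_power2 mult_nonneg_nonneg)
    have "0 \<le> (\<Sum>i<nI. a i * (cmod (d i))\<^sup>2)" by (rule sum_nonneg) (use nn in blast)
    then have "(\<Sum>i<nI. a i * (cmod (d i))\<^sup>2) = 0" using s0 by linarith
    moreover have "(\<Sum>i<nI. a i * (cmod (d i))\<^sup>2) = 0 \<longleftrightarrow> (\<forall>i\<in>{..<nI}. a i * (cmod (d i))\<^sup>2 = 0)"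
      by (rule sum_nonneg_eq_0_iff) (use nn in auto)
    ultimately have "\<forall>i\<in>{..<nI}. a i * (cmod (d i))\<^sup>2 = 0" by simp
    then have d0: "d i = 0" if "i < nI" for i
    proof -
      have "a i = 0 \<or> d i = 0" using \<open>\<forall>i\<in>{..<nI}. a i * (cmod (d i))\<^sup>2 = 0\<close> that by simp
      then show ?thesis using a_pos[OF that] by auto
    qed
    have "vec n g2 = 0\<^sub>v n" by (rule eq_vecI) (auto simp: g2_def d0 n_def)
    then have A0: "adj A *\<^sub>v \<phi> = 0\<^sub>v n" using phi by simp
    have "H *\<^sub>v \<phi> = B *\<^sub>v (adj A *\<^sub>v \<phi>)"
      unfolding HBA by (rule assoc_mult_mat_vec[OF B adj_carrier[OF A] phi(1)])
    also have "\<dots> = 0\<^sub>v n" unfolding A0 using B by (auto intro!: eq_vecI simp: scalar_prod_def)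
    finally have "\<phi> \<in> mat_kernel H" using H phi by (auto intro: mat_kernelI)
    then obtain \<alpha> where \<alpha>: "\<forall>l<n. \<phi> $ l = (\<Sum>b\<in>Bs. \<alpha> b * b $ l)" using Bsp by blast
    have cval: "c i = (\<Sum>b\<in>Bs. \<alpha> b * (- (adj B *\<^sub>v b)) $ (nE + i))" if i: "i < nI" for i
    proof -
      have k: "nE + i < n" using i by (simp add: n_def)
      have "c i = vec n g1 $ (nE + i)" using k i by (simp add: g1_def)
      also have "\<dots> = (- (adj B *\<^sub>v \<phi>)) $ (nE + i)" using phi by simp
      also have "\<dots> = (\<Sum>b\<in>Bs. \<alpha> b * (- (adj B *\<^sub>v b)) $ (nE + i))"
        by (rule lin_coord[OF B Bs(1) Bsc phi(1) \<alpha> k])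
      finally show ?thesis .
    qed
    have psi_eq: "\<psi> = (\<Sum>b\<in>Bs. fscale (\<alpha> b) (G b))"
    proof (intro ext)
      fix j x
      show "\<psi> j x = (\<Sum>b\<in>Bs. fscale (\<alpha> b) (G b)) j x"
        unfolding sum_fun_apply2
      proof (cases j)
        case (Inl e)
        show "\<psi> j x = (\<Sum>b\<in>Bs. fscale (\<alpha> b) (G b) j x)"
        proof (cases "e < nE")
          case True then show ?thesis using Inl extl by (simp add: fscale_def G_def)
        next
          case False
          then have "j \<notin> edges nE nI" using Inl by (auto simp: edges_def)
          then show ?thesis using noe Inl by (simp add: fscale_def G_def)
        qed
      next
        case (Inr i)
        show "\<psi> j x = (\<Sum>b\<in>Bs. fscale (\<alpha> b) (G b) j x)"
        proof (cases "i < nI")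
          case True
          show ?thesis
          proof (cases "x \<in> {0..a i}")
            case xin: True
            have "\<psi> j x = c i" using inr[OF True xin] d0[OF True] Inr by (simp add: c_def d_def)
            then show ?thesis using cval[OF True] Inr True xin by (simp add: fscale_def G_def)
          next
            case False
            have nc: "\<not> (0 \<le> x \<and> x \<le> a i)" using False by simp
            show ?thesis using outr[OF True False] Inr True by (simp add: fscale_def G_def nc)
          qed
        next
          case False
          then have "j \<notin> edges nE nI" using Inr by (auto simp: edges_def)
          then show ?thesis using noe Inr False by (simp add: fscale_def G_def)
        qed
      qed
    qed
    show "\<psi> \<in> VS.span S"
      unfolding psi_eq
      by (intro VS.span_sum VS.span_scale VS.span_base) (simp add: S_def)
  qed
  have finS: "finite S" using Bs(1) by (simp add: S_def)
  have cardS: "card S \<le> n_zero H" using card_image_le[OF Bs(1), of G] Bs(3) by (simp add: S_def)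
  have "VS.dim (Delta_ker nE nI a A B) \<le> card S" by (rule VS.dim_le_card[OF key finS])
  then show ?thesis using key finS cardS by (auto simp: H_def)
qed

end
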